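(* Let $G$ be a graph. Then (i) $\mathrm{gp}(G)\le 2\,\mathrm{ip}(G)$; and (ii) if $V(G)$ can be covered by isometric cycles of $G$, then $\mathrm{gp}(G)\le 3\,\mathrm{ic}(G)$.
   Context: All graphs are finite, simple and connected. A subgraph $H$ of $G$ is isometric if $d_H(x,y)=d_G(x,y)$ for all $x,y\in V(H)$. The isometric-path number $\mathrm{ip}(G)$ is the minimum number of isometric paths (geodesics) of $G$ whose vertex sets cover $V(G)$. The isometric-cycle number $\mathrm{ic}(G)$ is the minimum number of isometric cycles of $G$ whose vertex sets cover $V(G)$. A set $S$ of vertices is a general position set if no three vertices of $S$ lie on a common geodesic of $G$; $\mathrm{gp}(G)$ is the maximum cardinality of a general position set of $G$. *)

theory Defs
  imports Main
begin

definition simple_graph :: "'a set \<Rightarrow> ('a \<Rightarrow> 'a \<Rightarrow> bool) \<Rightarrow> bool" where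
  "simple_graph V E \<longleftrightarrow> finite V \<and> (\<forall>u v. E u v \<longrightarrow> u \<in> V \<and> v \<in> V)
     \<and> (\<forall>u v. E u v \<longrightarrow> E v u) \<and> (\<forall>u. \<not> E u u)"

definition walk :: "'a set \<Rightarrow> ('a \<Rightarrow> 'a \<Rightarrow> bool) \<Rightarrow> 'a list \<Rightarrow> bool" where
  "walk V E xs \<longleftrightarrow> xs \<noteq> [] \<and> set xs \<subseteq> V \<and>
     (\<forall>i. i + 1 < length xs \<longrightarrow> E (xs ! i) (xs ! (i + 1)))"

definition connected_graph :: "'a set \<Rightarrow> ('a \<Rightarrow> 'a \<Rightarrow> bool) \<Rightarrow> bool" where
  "connected_graph V E \<longleftrightarrow> simple_graph V E \<and> V \<noteq> {} \<and>
     (\<forall>x\<in>V. \<forall>y\<in>V. \<exists>xs. walk V E xs \<and> hd xs = x \<and> last xs = y)"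

definition dist :: "'a set \<Rightarrow> ('a \<Rightarrow> 'a \<Rightarrow> bool) \<Rightarrow> 'a \<Rightarrow> 'a \<Rightarrow> nat" where
  "dist V E x y = (LEAST n. \<exists>xs. walk V E xs \<and> hd xs = x \<and> last xs = y \<and> length xs = n + 1)"

definition path_edges :: "'a list \<Rightarrow> 'a \<Rightarrow> 'a \<Rightarrow> bool" where
  "path_edges xs u v \<longleftrightarrow> (\<exists>i. i + 1 < length xs \<and>
     ((u = xs ! i \<and> v = xs ! (i + 1)) \<or> (v = xs ! i \<and> u = xs ! (i + 1))))"

definition cycle_edges :: "'a list \<Rightarrow> 'a \<Rightarrow> 'a \<Rightarrow> bool" where
  "cycle_edges xs u v \<longleftrightarrow> (\<exists>i < length xs.
     (u = xs ! i \<and> v = xs ! ((i + 1) mod length xs)) \<or>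
     (v = xs ! i \<and> u = xs ! ((i + 1) mod length xs)))"

definition isometric_path :: "'a set \<Rightarrow> ('a \<Rightarrow> 'a \<Rightarrow> bool) \<Rightarrow> 'a list \<Rightarrow> bool" where
  "isometric_path V E xs \<longleftrightarrow> walk V E xs \<and> distinct xs \<and>
     (\<forall>x\<in>set xs. \<forall>y\<in>set xs. dist (set xs) (path_edges xs) x y = dist V E x y)"

definition isometric_cycle :: "'a set \<Rightarrow> ('a \<Rightarrow> 'a \<Rightarrow> bool) \<Rightarrow> 'a list \<Rightarrow> bool" where
  "isometric_cycle V E xs \<longleftrightarrow> length xs \<ge> 3 \<and> distinct xs \<and> set xs \<subseteq> V \<and>
     (\<forall>i < length xs. E (xs ! i) (xs ! ((i + 1) mod length xs))) \<and>
     (\<forall>x\<in>set xs. \<forall>y\<in>set xs. dist (set xs) (cycle_edges xs) x y = dist V E x y)"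

definition ip :: "'a set \<Rightarrow> ('a \<Rightarrow> 'a \<Rightarrow> bool) \<Rightarrow> nat" where
  "ip V E = (LEAST k. \<exists>P. finite P \<and> card P = k \<and> (\<forall>p\<in>P. isometric_path V E p)
                         \<and> (\<Union>p\<in>P. set p) = V)"

definition ic :: "'a set \<Rightarrow> ('a \<Rightarrow> 'a \<Rightarrow> bool) \<Rightarrow> nat" where
  "ic V E = (LEAST k. \<exists>C. finite C \<and> card C = k \<and> (\<forall>c\<in>C. isometric_cycle V E c)
                         \<and> (\<Union>c\<in>C. set c) = V)"

definition general_position :: "'a set \<Rightarrow> ('a \<Rightarrow> 'a \<Rightarrow> bool) \<Rightarrow> 'a set \<Rightarrow> bool" where
  "general_position V E S \<longleftrightarrow> S \<subseteq> V \<and>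
     (\<forall>u\<in>S. \<forall>v\<in>S. \<forall>w\<in>S. u \<noteq> v \<and> u \<noteq> w \<and> v \<noteq> w \<longrightarrow>
        \<not> (\<exists>p. isometric_path V E p \<and> {u, v, w} \<subseteq> set p))"

definition gp :: "'a set \<Rightarrow> ('a \<Rightarrow> 'a \<Rightarrow> bool) \<Rightarrow> nat" where
  "gp V E = Max (card ` {S. general_position V E S})"

end

theory Submission
  imports Defs
begin

lemma walk_alt: "walk V E xs \<longleftrightarrow> xs \<noteq> [] \<and> set xs \<subseteq> V \<and> successively E xs"
  unfolding walk_def successively_conv_nth by simp

lemma dist_le:
  assumes "walk V E xs" "hd xs = x" "last xs = y"
  shows "dist V E x y \<le> length xs - 1"
proof -
  have "xs \<noteq> []" using assms(1) by (simp add: walk_def)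
  then have "\<exists>ys. walk V E ys \<and> hd ys = x \<and> last ys = y \<and> length ys = (length xs - 1) + 1"
    using assms by (intro exI[of _ xs]) auto
  then show ?thesis unfolding dist_def by (rule Least_le)
qed

lemma dist_ex:
  assumes "walk V E xs" "hd xs = x" "last xs = y"
  shows "\<exists>ys. walk V E ys \<and> hd ys = x \<and> last ys = y \<and> length ys = dist V E x y + 1"
proof -
  have "xs \<noteq> []" using assms(1) by (simp add: walk_def)
  then have "\<exists>n ys. walk V E ys \<and> hd ys = x \<and> last ys = y \<and> length ys = n + 1"
    using assms by (intro exI[of _ "length xs - 1"] exI[of _ xs]) auto
  then show ?thesis unfolding dist_def by (rule LeastI_ex)
qed

lemma dist_self: "x \<in> V \<Longrightarrow> dist V E x x = 0"
  using dist_le[of V E "[x]" x x] by (simp add: walk_def)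

lemma walk_concat:
  assumes "walk V E xs" "walk V E ys" "last xs = hd ys"
  shows "walk V E (xs @ tl ys) \<and> hd (xs @ tl ys) = hd xs \<and> last (xs @ tl ys) = last ys
     \<and> length (xs @ tl ys) = length xs + length ys - 1"
proof -
  obtain y ys' where ys: "ys = y # ys'" using assms(2) by (cases ys) (auto simp: walk_def)
  have xs: "xs \<noteq> []" using assms(1) by (simp add: walk_def)
  have "successively E ys'" "ys' \<noteq> [] \<Longrightarrow> E y (hd ys')"
    using assms(2) ys by (auto simp: walk_alt successively_Cons)
  then have "successively E (xs @ ys')"
    using assms xs ys by (auto simp: walk_alt successively_append_iff)
  then show ?thesis using assms xs ys by (auto simp: walk_alt)
qed

lemma dist_triangle:
  assumes "walk V E xs" "hd xs = x" "last xs = y"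
    and "walk V E ys" "hd ys = y" "last ys = z"
  shows "dist V E x z \<le> dist V E x y + dist V E y z"
proof -
  obtain as where a: "walk V E as" "hd as = x" "last as = y" "length as = dist V E x y + 1"
    using dist_ex[OF assms(1-3)] by blast
  obtain bs where b: "walk V E bs" "hd bs = y" "last bs = z" "length bs = dist V E y z + 1"
    using dist_ex[OF assms(4-6)] by blast
  have "walk V E (as @ tl bs) \<and> hd (as @ tl bs) = x \<and> last (as @ tl bs) = z
     \<and> length (as @ tl bs) = length as + length bs - 1"
    using walk_concat[OF a(1) b(1)] a b by auto
  then show ?thesis using dist_le[of V E "as @ tl bs" x z] a b by auto
qed

lemma walk_rev:
  assumes "\<forall>u v. E u v \<longrightarrow> E v u" "walk V E xs"
  shows "walk V E (rev xs)"
  using assms unfolding walk_alt by (auto intro: successively_mono)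

lemma dist_sym_le:
  assumes "\<forall>u v. E u v \<longrightarrow> E v u" "walk V E xs" "hd xs = x" "last xs = y"
  shows "dist V E y x \<le> dist V E x y"
proof -
  obtain as where a: "walk V E as" "hd as = x" "last as = y" "length as = dist V E x y + 1"
    using dist_ex[OF assms(2-4)] by blast
  have "as \<noteq> []" using a by (simp add: walk_def)
  then show ?thesis using dist_le[of V E "rev as" y x] walk_rev[OF assms(1) a(1)] a
    by (simp add: hd_rev last_rev)
qed

lemma dist_sym:
  assumes "\<forall>u v. E u v \<longrightarrow> E v u" "walk V E xs" "hd xs = x" "last xs = y"
  shows "dist V E y x = dist V E x y"
proof -
  have "xs \<noteq> []" using assms by (simp add: walk_def)
  then have "dist V E x y \<le> dist V E y x"
    using dist_sym_le[OF assms(1) walk_rev[OF assms(1,2)]] assms by (simp add: hd_rev last_rev)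
  then show ?thesis using dist_sym_le[OF assms] by simp
qed

lemma dist_mono:
  assumes "\<And>ys. walk V' E' ys \<Longrightarrow> walk V E ys" "walk V' E' xs" "hd xs = x" "last xs = y"
  shows "dist V E x y \<le> dist V' E' x y"
proof -
  obtain as where a: "walk V' E' as" "hd as = x" "last as = y" "length as = dist V' E' x y + 1"
    using dist_ex[OF assms(2-4)] by blast
  show ?thesis using dist_le[OF assms(1)[OF a(1)] a(2,3)] a(4) by simp
qed

lemma subwalk:
  assumes "walk V E xs" "i \<le> j" "j < length xs"
  shows "walk V E (take (j + 1 - i) (drop i xs)) \<and> hd (take (j + 1 - i) (drop i xs)) = xs ! i
    \<and> last (take (j + 1 - i) (drop i xs)) = xs ! j \<and> length (take (j + 1 - i) (drop i xs)) = j + 1 - i"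
proof -
  let ?ys = "take (j + 1 - i) (drop i xs)"
  have len: "length ?ys = j + 1 - i" using assms by simp
  have nth: "\<And>t. t < j + 1 - i \<Longrightarrow> ?ys ! t = xs ! (i + t)" using assms by simp
  have "set ?ys \<subseteq> set xs" by (meson set_drop_subset set_take_subset subset_trans)
  moreover have "?ys \<noteq> []"
  proof -
    have "length ?ys \<noteq> 0" using len assms(2) by linarith
    then show ?thesis by (metis list.size(3))
  qed
  moreover have "\<forall>t. t + 1 < length ?ys \<longrightarrow> E (?ys ! t) (?ys ! (t + 1))"
  proof (intro allI impI)
    fix t assume "t + 1 < length ?ys"
    then show "E (?ys ! t) (?ys ! (t + 1))"
    proof -
      have t1: "t + 1 < j + 1 - i" using \<open>t + 1 < length ?ys\<close> len by linarith
      then have t0: "t < j + 1 - i" by linarith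
      have "(i + t) + 1 < length xs" using t1 assms(2,3) by linarith
      then have "E (xs ! (i + t)) (xs ! ((i + t) + 1))" using assms(1) unfolding walk_def by blast
      then show ?thesis using nth[OF t0] nth[OF t1] by (simp add: add.assoc)
    qed
  qed
  moreover have "hd ?ys = xs ! i"
  proof -
    have "0 < j + 1 - i" using assms(2) by linarith
    then have "?ys ! 0 = xs ! i" using nth[of 0] by simp
    then show ?thesis using \<open>?ys \<noteq> []\<close> by (simp add: hd_conv_nth)
  qed
  moreover have "last ?ys = xs ! j"
  proof -
    have a: "j - i < j + 1 - i" "length ?ys - 1 = j - i" "i + (j - i) = j" using assms(2) len by linarith+
    then have "?ys ! (j - i) = xs ! j" using nth[OF a(1)] by simp
    then show ?thesis using \<open>?ys \<noteq> []\<close> a(2) by (simp add: last_conv_nth)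
  qed
  ultimately show ?thesis using assms(1) len unfolding walk_def by auto
qed


lemma cg_conn:
  assumes "connected_graph V E" "x \<in> V" "y \<in> V"
  shows "\<exists>xs. walk V E xs \<and> hd xs = x \<and> last xs = y"
  using assms unfolding connected_graph_def by blast

lemma cg_sym: "connected_graph V E \<Longrightarrow> \<forall>u v. E u v \<longrightarrow> E v u"
  unfolding connected_graph_def simple_graph_def by blast

lemma cg_triangle:
  assumes "connected_graph V E" "x \<in> V" "y \<in> V" "z \<in> V"
  shows "dist V E x z \<le> dist V E x y + dist V E y z"
  using cg_conn[OF assms(1,2,3)] cg_conn[OF assms(1,3,4)] dist_triangle by metis

lemma cg_dist_sym:
  assumes "connected_graph V E" "x \<in> V" "y \<in> V"
  shows "dist V E y x = dist V E x y"
  using cg_conn[OF assms] dist_sym[OF cg_sym[OF assms(1)]] by metis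

lemma walk_nth_in: "walk V E xs \<Longrightarrow> i < length xs \<Longrightarrow> xs ! i \<in> V"
  unfolding walk_def by auto

lemma subwalk_dist:
  assumes "walk V E xs" "i \<le> j" "j < length xs"
  shows "dist V E (xs ! i) (xs ! j) \<le> j - i"
  using subwalk[OF assms] dist_le[of V E _ "xs ! i" "xs ! j"] by fastforce

lemma shortest_dist:
  assumes cg: "connected_graph V E" and w: "walk V E xs"
    and len: "length xs = dist V E (hd xs) (last xs) + 1" and ij: "i \<le> j" "j < length xs"
  shows "dist V E (xs ! i) (xs ! j) = j - i"
proof -
  define m where "m = length xs - 1"
  have ne: "xs \<noteq> []" using w by (simp add: walk_def)
  have m: "m < length xs" "hd xs = xs ! 0" "last xs = xs ! m"
    using ne by (auto simp: m_def hd_conv_nth last_conv_nth)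
  have inV: "\<And>k. k < length xs \<Longrightarrow> xs ! k \<in> V" using w walk_nth_in by metis
  have d0m: "dist V E (xs ! 0) (xs ! m) = m" using len m m_def by simp
  have a: "dist V E (xs ! 0) (xs ! i) \<le> i" using subwalk_dist[OF w, of 0 i] ij by simp
  have b: "dist V E (xs ! j) (xs ! m) \<le> m - j" using subwalk_dist[OF w, of j m] ij m_def by simp
  have c: "dist V E (xs ! i) (xs ! j) \<le> j - i" using subwalk_dist[OF w ij] .
  have "dist V E (xs ! 0) (xs ! m) \<le> dist V E (xs ! 0) (xs ! i) + dist V E (xs ! i) (xs ! m)"
    using cg_triangle[OF cg inV[of 0] inV[of i] inV[of m]] ij m by linarith
  moreover have "dist V E (xs ! i) (xs ! m) \<le> dist V E (xs ! i) (xs ! j) + dist V E (xs ! j) (xs ! m)"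
    using cg_triangle[OF cg inV[of i] inV[of j] inV[of m]] ij m by linarith
  ultimately show ?thesis using a b c d0m ij m_def by linarith
qed

lemma sub_walk_G:
  assumes cg: "connected_graph V E" and w: "walk V E xs" and w2: "walk (set xs) (path_edges xs) ys"
  shows "walk V E ys"
proof -
  have "\<And>u v. path_edges xs u v \<Longrightarrow> E u v"
    using w cg_sym[OF cg] unfolding path_edges_def walk_def by metis
  moreover have "set xs \<subseteq> V" using w by (simp add: walk_def)
  ultimately show ?thesis using w2 unfolding walk_def by blast
qed

lemma walk_self_sub: "walk V E xs \<Longrightarrow> walk (set xs) (path_edges xs) xs"
  unfolding walk_def path_edges_def by blast

lemma shortest_isometric:
  assumes cg: "connected_graph V E" and w: "walk V E xs"
    and len: "length xs = dist V E (hd xs) (last xs) + 1"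
  shows "isometric_path V E xs"
proof -
  have inV: "\<And>k. k < length xs \<Longrightarrow> xs ! k \<in> V" using w walk_nth_in by metis
  have ws: "walk (set xs) (path_edges xs) xs" using walk_self_sub[OF w] .
  have symS: "\<forall>u v. path_edges xs u v \<longrightarrow> path_edges xs v u" unfolding path_edges_def by blast
  have le: "dist (set xs) (path_edges xs) (xs ! i) (xs ! j) = dist V E (xs ! i) (xs ! j)"
    if ij: "i \<le> j" "j < length xs" for i j
  proof -
    have "dist (set xs) (path_edges xs) (xs ! i) (xs ! j) \<le> j - i" using subwalk_dist[OF ws ij] .
    moreover have "dist V E (xs ! i) (xs ! j) \<le> dist (set xs) (path_edges xs) (xs ! i) (xs ! j)"
      using dist_mono[of "set xs" "path_edges xs" V E] sub_walk_G[OF cg w] subwalk[OF ws ij] by blast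
    ultimately show ?thesis using shortest_dist[OF cg w len ij] by linarith
  qed
  have dist: "distinct xs"
    unfolding distinct_conv_nth
  proof (intro allI impI)
    fix i j assume ij: "i < length xs" "j < length xs" "i \<noteq> j"
    show "xs ! i \<noteq> xs ! j"
    proof (cases "i < j")
      case True
      then show ?thesis using shortest_dist[OF cg w len, of i j] dist_self[OF inV[of i], of E] ij by auto
    next
      case False
      then show ?thesis using shortest_dist[OF cg w len, of j i] dist_self[OF inV[of j], of E] ij by auto
    qed
  qed
  have "\<forall>x\<in>set xs. \<forall>y\<in>set xs. dist (set xs) (path_edges xs) x y = dist V E x y"
  proof (intro ballI)
    fix x y assume "x \<in> set xs" "y \<in> set xs"
    then obtain i j where i: "i < length xs" "x = xs ! i" and j: "j < length xs" "y = xs ! j"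
      by (auto simp: in_set_conv_nth)
    show "dist (set xs) (path_edges xs) x y = dist V E x y"
    proof (cases "i \<le> j")
      case True then show ?thesis using le i j by simp
    next
      case False
      then have ji: "j \<le> i" by simp
      have "dist (set xs) (path_edges xs) (xs ! i) (xs ! j) = dist (set xs) (path_edges xs) (xs ! j) (xs ! i)"
        using subwalk[OF ws ji i(1)] dist_sym[OF symS] by metis
      also have "\<dots> = dist V E (xs ! j) (xs ! i)" using le[OF ji i(1)] .
      also have "\<dots> = dist V E (xs ! i) (xs ! j)" using cg_dist_sym[OF cg inV[OF j(1)] inV[OF i(1)]] by simp
      finally show ?thesis using i j by simp
    qed
  qed
  then show ?thesis using w dist unfolding isometric_path_def by blast
qed


lemma cyc_walk:
  assumes "0 < length c" "i < length c"
  shows "walk (set c) (cycle_edges c) (map (\<lambda>t. c ! ((i + t) mod length c)) [0..<k+1])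
    \<and> hd (map (\<lambda>t. c ! ((i + t) mod length c)) [0..<k+1]) = c ! i
    \<and> last (map (\<lambda>t. c ! ((i + t) mod length c)) [0..<k+1]) = c ! ((i + k) mod length c)"
proof -
  let ?n = "length c"
  let ?ys = "map (\<lambda>t. c ! ((i + t) mod ?n)) [0..<k+1]"
  have "set ?ys \<subseteq> set c" using assms(1) by auto
  moreover have "\<forall>t. t + 1 < length ?ys \<longrightarrow> cycle_edges c (?ys ! t) (?ys ! (t + 1))"
  proof (intro allI impI)
    fix t assume t: "t + 1 < length ?ys"
    then have "?ys ! t = c ! ((i + t) mod ?n)" "?ys ! (t+1) = c ! ((i + t + 1) mod ?n)"
      by (simp_all add: nth_map_upt del: upt_Suc)
    moreover have "((i + t) mod ?n + 1) mod ?n = (i + t + 1) mod ?n"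
      by (simp add: mod_Suc_eq)
    moreover have "(i + t) mod ?n < ?n" using assms(1) by simp
    ultimately show "cycle_edges c (?ys ! t) (?ys ! (t + 1))"
      unfolding cycle_edges_def by (intro exI[of _ "(i + t) mod ?n"]) simp
  qed
  moreover have "hd ?ys = c ! i" using assms by (simp add: hd_map del: upt_Suc)
  moreover have "last ?ys = c ! ((i + k) mod ?n)" using assms by (simp add: last_map del: upt_Suc)
  ultimately show ?thesis unfolding walk_def by simp
qed

lemma cyc_upper:
  assumes "0 < length c" "i < length c"
  shows "dist (set c) (cycle_edges c) (c ! i) (c ! ((i + k) mod length c)) \<le> k"
  using cyc_walk[OF assms, of k] dist_le[of "set c" "cycle_edges c"] by fastforce

lemma cyc_edge_idx:
  assumes "distinct c" "i < length c" "i' < length c" "cycle_edges c (c ! i) (c ! i')"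
  shows "i' = (i + 1) mod length c \<or> i = (i' + 1) mod length c"
proof -
  obtain a where a: "a < length c" "(c ! i = c ! a \<and> c ! i' = c ! ((a + 1) mod length c)) \<or>
     (c ! i' = c ! a \<and> c ! i = c ! ((a + 1) mod length c))"
    using assms(4) unfolding cycle_edges_def by blast
  have "0 < length c" using a(1) by linarith
  then have m: "(a + 1) mod length c < length c" by simp
  from a(2) show ?thesis
  proof
    assume b: "c ! i = c ! a \<and> c ! i' = c ! ((a + 1) mod length c)"
    then have "i = a" using nth_eq_iff_index_eq[OF assms(1) assms(2) a(1)] by blast
    moreover have "i' = (a + 1) mod length c" using b nth_eq_iff_index_eq[OF assms(1) assms(3) m] by blast
    ultimately show ?thesis by blast
  next
    assume b: "c ! i' = c ! a \<and> c ! i = c ! ((a + 1) mod length c)"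
    then have "i' = a" using nth_eq_iff_index_eq[OF assms(1) assms(3) a(1)] by blast
    moreover have "i = (a + 1) mod length c" using b nth_eq_iff_index_eq[OF assms(1) assms(2) m] by blast
    ultimately show ?thesis by blast
  qed
qed

lemma cyc_lift:
  assumes dc: "distinct c" and n: "0 < length c"
  shows "walk (set c) (cycle_edges c) ys \<Longrightarrow> \<forall>i j p. i < length c \<longrightarrow> j < length c \<longrightarrow>
     hd ys = c ! i \<longrightarrow> last ys = c ! j \<longrightarrow> p mod int (length c) = int i \<longrightarrow>
     (\<exists>q. q mod int (length c) = int j \<and> \<bar>q - p\<bar> \<le> int (length ys) - 1)"
proof (induction ys)
  case Nil
  then show ?case by (simp add: walk_def)
next
  case (Cons y ys)
  let ?n = "length c"
  show ?case
  proof (intro allI impI)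
    fix i j p assume i: "i < ?n" and j: "j < ?n" and h: "hd (y # ys) = c ! i"
      and l: "last (y # ys) = c ! j" and p: "p mod int ?n = int i"
    show "\<exists>q. q mod int ?n = int j \<and> \<bar>q - p\<bar> \<le> int (length (y # ys)) - 1"
    proof (cases "ys = []")
      case True
      then have "c ! i = c ! j" using h l by simp
      then have "i = j" using i j dc nth_eq_iff_index_eq by blast
      then show ?thesis using p by (intro exI[of _ p]) simp
    next
      case False
      have wys: "walk (set c) (cycle_edges c) ys" and e: "cycle_edges c y (hd ys)"
        using Cons.prems False by (auto simp: walk_alt successively_Cons)
      have "hd ys \<in> set c" using wys False by (auto simp: walk_def)
      then obtain i' where i': "i' < ?n" "hd ys = c ! i'" by (auto simp: in_set_conv_nth)
      have y: "y = c ! i" using h by simp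
      have l': "last ys = c ! j" using l False by simp
      have "\<exists>p'. p' mod int ?n = int i' \<and> \<bar>p' - p\<bar> \<le> 1"
      proof -
        have "i' = (i + 1) mod ?n \<or> i = (i' + 1) mod ?n"
          using cyc_edge_idx[OF dc i i'(1)] e y i' by simp
        then show ?thesis
        proof
          assume a: "i' = (i + 1) mod ?n"
          have "(p + 1) mod int ?n = int i'"
            using p a by (metis mod_add_left_eq of_nat_1 of_nat_add of_nat_mod)
          then show ?thesis by (intro exI[of _ "p + 1"]) simp
        next
          assume a: "i = (i' + 1) mod ?n"
          have "(p - 1) mod int ?n = (int i - 1) mod int ?n" using p by (metis mod_diff_left_eq)
          also have "\<dots> = ((int i' + 1) mod int ?n - 1) mod int ?n"
            using a by (metis of_nat_1 of_nat_add of_nat_mod)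
          also have "\<dots> = int i' mod int ?n" by (metis mod_diff_left_eq add_diff_cancel_right')
          also have "\<dots> = int i'" using i'(1) by simp
          finally show ?thesis by (intro exI[of _ "p - 1"]) simp
        qed
      qed
      then obtain p' where p': "p' mod int ?n = int i'" "\<bar>p' - p\<bar> \<le> 1" by blast
      obtain q where q: "q mod int ?n = int j" "\<bar>q - p'\<bar> \<le> int (length ys) - 1"
        using Cons.IH[OF wys] i'(1) j i'(2) l' p'(1) by blast
      show ?thesis using q p' by (intro exI[of _ q]) auto
    qed
  qed
qed

lemma int_mod_lower:
  fixes m n l :: int
  assumes "m mod n = l" "0 \<le> l" "2 * l \<le> n" "0 < n"
  shows "l \<le> \<bar>m\<bar>"
proof (cases "0 \<le> m")
  case True
  then show ?thesis using assms zmod_le_nonneg_dividend by fastforce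
next
  case False
  have e: "m = n * (m div n) + l" using assms(1) by (metis mult.commute div_mult_mod_eq)
  have "m div n < 0" using False assms(4) by (simp add: div_neg_pos_less0)
  then have "n * (m div n) \<le> n * (-1)" using assms(4) by (intro mult_left_mono) auto
  then show ?thesis using e False assms by linarith
qed

lemma cyc_lower:
  assumes dc: "distinct c" and n: "0 < length c" and i: "i < length c" and l: "2 * l \<le> length c"
  shows "l \<le> dist (set c) (cycle_edges c) (c ! i) (c ! ((i + l) mod length c))"
proof -
  let ?n = "length c"
  let ?j = "(i + l) mod ?n"
  obtain ys where ys: "walk (set c) (cycle_edges c) ys" "hd ys = c ! i" "last ys = c ! ?j"
    "length ys = dist (set c) (cycle_edges c) (c ! i) (c ! ?j) + 1"
    using dist_ex[of "set c" "cycle_edges c" _ "c ! i" "c ! ?j"] cyc_walk[OF n i, of l] by blast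
  have j: "?j < ?n" using n by simp
  obtain q where q: "q mod int ?n = int ?j" "\<bar>q - int i\<bar> \<le> int (length ys) - 1"
  proof -
    have "int i mod int ?n = int i" using i by simp
    then show ?thesis using cyc_lift[OF dc n ys(1)] i j ys(2,3) that by blast
  qed
  have ln: "l < ?n" using l n by linarith
  have "(q - int i) mod int ?n = (int ?j - int i) mod int ?n" using q(1) by (metis mod_diff_left_eq)
  also have "\<dots> = (int i + int l - int i) mod int ?n" by (metis mod_diff_left_eq of_nat_add of_nat_mod)
  also have "\<dots> = int l" using ln by simp
  finally have "int l \<le> \<bar>q - int i\<bar>" using int_mod_lower[of "q - int i" "int ?n" "int l"] l n by linarith
  then show ?thesis using q(2) ys(4) by linarith
qed


lemma cyc_triple:
  assumes cg: "connected_graph V E" and ic: "isometric_cycle V E c" and p: "p < length c"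
    and l: "0 < l1" "0 < l2" "2 * (l1 + l2) \<le> length c"
  shows "\<exists>P. isometric_path V E P \<and>
     {c ! p, c ! ((p + l1) mod length c), c ! ((p + l1 + l2) mod length c)} \<subseteq> set P \<and>
     c ! p \<noteq> c ! ((p + l1) mod length c) \<and> c ! p \<noteq> c ! ((p + l1 + l2) mod length c) \<and>
     c ! ((p + l1) mod length c) \<noteq> c ! ((p + l1 + l2) mod length c)"
proof -
  let ?n = "length c"
  define a where "a = c ! p"
  define b where "b = c ! ((p + l1) mod ?n)"
  define d where "d = c ! ((p + l1 + l2) mod ?n)"
  let ?Dc = "dist (set c) (cycle_edges c)"
  have n: "0 < ?n" using p by linarith
  have dc: "distinct c" and sc: "set c \<subseteq> V"
    and iso: "\<forall>x\<in>set c. \<forall>y\<in>set c. ?Dc x y = dist V E x y"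
    using ic unfolding isometric_cycle_def by blast+
  have q1: "(p + l1) mod ?n < ?n" using n by simp
  have abd: "a \<in> set c" "b \<in> set c" "d \<in> set c" unfolding a_def b_def d_def using p n by simp_all
  have u1: "?Dc a b \<le> l1" unfolding a_def b_def using cyc_upper[OF n p, of l1] .
  have u2: "?Dc b d \<le> l2"
  proof -
    have "((p + l1) mod ?n + l2) mod ?n = (p + l1 + l2) mod ?n" by (simp add: mod_add_left_eq)
    then show ?thesis unfolding b_def d_def using cyc_upper[OF n q1, of l2] by simp
  qed
  have lo: "l1 + l2 \<le> ?Dc a d" unfolding a_def d_def
    using cyc_lower[OF dc n p l(3)] by (simp add: add.assoc)
  have tri: "dist V E a d \<le> dist V E a b + dist V E b d"
    using cg_triangle[OF cg] abd sc by (meson subsetD)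
  have e1: "dist V E a b = l1" and e2: "dist V E b d = l2" and e3: "dist V E a d = l1 + l2"
  proof -
    have "?Dc a b = dist V E a b" "?Dc b d = dist V E b d" "?Dc a d = dist V E a d"
      using iso abd by blast+
    then have "dist V E a b \<le> l1" "dist V E b d \<le> l2" "l1 + l2 \<le> dist V E a d"
      using u1 u2 lo by simp_all
    then show "dist V E a b = l1" "dist V E b d = l2" "dist V E a d = l1 + l2" using tri by linarith+
  qed
  have aV: "a \<in> V" "b \<in> V" "d \<in> V" using abd sc by blast+
  obtain w1 where w1: "walk V E w1" "hd w1 = a" "last w1 = b" "length w1 = dist V E a b + 1"
    using cg_conn[OF cg aV(1) aV(2)] dist_ex[of V E _ a b] by blast
  obtain w2 where w2: "walk V E w2" "hd w2 = b" "last w2 = d" "length w2 = dist V E b d + 1"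
    using cg_conn[OF cg aV(2) aV(3)] dist_ex[of V E _ b d] by blast
  have cc: "walk V E (w1 @ tl w2) \<and> hd (w1 @ tl w2) = a \<and> last (w1 @ tl w2) = d
     \<and> length (w1 @ tl w2) = length w1 + length w2 - 1"
    using walk_concat[OF w1(1) w2(1)] w1 w2 by simp
  then have "length (w1 @ tl w2) = dist V E (hd (w1 @ tl w2)) (last (w1 @ tl w2)) + 1"
    using w1(4) w2(4) e1 e2 e3 by simp
  then have ip: "isometric_path V E (w1 @ tl w2)" using shortest_isometric[OF cg] cc by blast
  have ne1: "w1 \<noteq> []" "w1 @ tl w2 \<noteq> []" using w1 by (auto simp: walk_def)
  have "a \<in> set (w1 @ tl w2)" using cc ne1 by (metis hd_in_set)
  moreover have "d \<in> set (w1 @ tl w2)" using cc ne1 by (metis last_in_set)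
  moreover have "b \<in> set (w1 @ tl w2)" using w1(3) ne1 by (metis last_in_set Un_iff set_append)
  moreover have "a \<noteq> b" using e1 l dist_self[OF aV(1), of E] by auto
  moreover have "b \<noteq> d" using e2 l dist_self[OF aV(2), of E] by auto
  moreover have "a \<noteq> d" using e3 l dist_self[OF aV(1), of E] by auto
  ultimately show ?thesis using ip unfolding a_def b_def d_def by blast
qed


lemma gp_bound:
  assumes sg: "simple_graph V E" and b: "\<And>S. general_position V E S \<Longrightarrow> card S \<le> K"
  shows "gp V E \<le> K"
proof -
  have fin: "finite V" using sg by (simp add: simple_graph_def)
  have "card ` {S. general_position V E S} \<subseteq> card ` Pow V"
    unfolding general_position_def by blast
  then have f: "finite (card ` {S. general_position V E S})"
    using fin by (meson finite_Pow_iff finite_imageI finite_subset)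
  have "general_position V E {}" unfolding general_position_def by simp
  then have ne: "card ` {S. general_position V E S} \<noteq> {}" by blast
  obtain S where "general_position V E S" "gp V E = card S"
    using Max_in[OF f ne] unfolding gp_def by auto
  then show ?thesis using b by simp
qed

lemma cover_bound:
  assumes "finite P" "S \<subseteq> (\<Union>p\<in>P. set p)" "\<And>p. p \<in> P \<Longrightarrow> card (S \<inter> set p) \<le> k"
  shows "card S \<le> k * card P"
proof -
  have "S = (\<Union>p\<in>P. S \<inter> set p)" using assms(2) by blast
  then have "card S \<le> (\<Sum>p\<in>P. card (S \<inter> set p))" using card_UN_le[OF assms(1)] by metis
  also have "\<dots> \<le> card P * k" using sum_bounded_above[of P "\<lambda>p. card (S \<inter> set p)" k] assms(3) by simp
  finally show ?thesis by (simp add: mult.commute)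
qed

lemma gp_contra:
  assumes "general_position V E S" "u \<in> S" "v \<in> S" "w \<in> S" "u \<noteq> v" "u \<noteq> w" "v \<noteq> w"
    "isometric_path V E P" "{u, v, w} \<subseteq> set P"
  shows False
  using assms unfolding general_position_def by blast

lemma path_le2:
  assumes "general_position V E S" "isometric_path V E p"
  shows "card (S \<inter> set p) \<le> 2"
proof (rule ccontr)
  assume "\<not> ?thesis"
  then have "3 \<le> card (S \<inter> set p)" by simp
  then obtain T where T: "T \<subseteq> S \<inter> set p" "card T = 3" by (meson obtain_subset_with_card_n)
  then obtain x y z where "T = {x, y, z}" "x \<noteq> y" "y \<noteq> z" "x \<noteq> z" by (auto simp: card_3_iff)
  then show False using gp_contra[OF assms(1) _ _ _ _ _ _ assms(2), of x y z] T by auto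
qed

lemma cycle_le3:
  assumes cg: "connected_graph V E" and g: "general_position V E S" and ic: "isometric_cycle V E c"
  shows "card (S \<inter> set c) \<le> 3"
proof (rule ccontr)
  assume "\<not> ?thesis"
  then have c4: "4 \<le> card (S \<inter> set c)" by simp
  let ?n = "length c"
  define I where "I = {i. i < ?n \<and> c ! i \<in> S}"
  have fI: "finite I" unfolding I_def by simp
  have "S \<inter> set c = (\<lambda>i. c ! i) ` I" unfolding I_def by (auto simp: in_set_conv_nth)
  then have "card (S \<inter> set c) \<le> card I" using card_image_le[OF fI] by metis
  then have cI: "4 \<le> card I" using c4 by linarith
  define l where "l = sorted_list_of_set I"
  have ls: "sorted_wrt (<) l" "set l = I" "length l = card I"
    unfolding l_def using fI by (simp_all add: strict_sorted_list_of_set)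
  define i1 where "i1 = l ! 0"
  define i2 where "i2 = l ! 1"
  define i3 where "i3 = l ! 2"
  define i4 where "i4 = l ! 3"
  have ord: "i1 < i2" "i2 < i3" "i3 < i4"
    unfolding i1_def i2_def i3_def i4_def using sorted_wrt_nth_less[OF ls(1)] ls(3) cI by auto
  have inI: "i1 \<in> I" "i2 \<in> I" "i3 \<in> I" "i4 \<in> I"
    unfolding i1_def i2_def i3_def i4_def using ls cI nth_mem by (metis le_trans less_le_trans numeral_le_iff
        one_le_numeral order.refl semiring_norm(68) semiring_norm(69) semiring_norm(70) semiring_norm(71) zero_less_numeral
        semiring_norm(72) semiring_norm(73) semiring_norm(74) semiring_norm(76) le_numeral_extra(1) numeral_One less_numeral_extra(1) not_less)+
  have lt: "i1 < ?n" "i2 < ?n" "i3 < ?n" "i4 < ?n" and inS: "c ! i1 \<in> S" "c ! i2 \<in> S" "c ! i3 \<in> S" "c ! i4 \<in> S"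
    using inI unfolding I_def by auto
  show False
  proof (cases "2 * (i3 - i1) \<le> ?n")
    case True
    have e: "(i1 + (i2 - i1)) mod ?n = i2" "(i1 + (i2 - i1) + (i3 - i2)) mod ?n = i3"
      using ord lt by simp_all
    have "2 * ((i2 - i1) + (i3 - i2)) \<le> ?n" 
    proof -
      obtain x y where xy: "i2 = i1 + x" "i3 = i2 + y"
        using ord by (metis less_imp_le le_iff_add)
      show ?thesis using True unfolding xy by simp
    qed
    then obtain P where "isometric_path V E P" "{c ! i1, c ! i2, c ! i3} \<subseteq> set P"
      "c ! i1 \<noteq> c ! i2" "c ! i1 \<noteq> c ! i3" "c ! i2 \<noteq> c ! i3"
      using cyc_triple[OF cg ic lt(1), of "i2 - i1" "i3 - i2"] ord e by auto
    then show False using gp_contra[OF g inS(1,2,3)] by blast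
  next
    case False
    have s1: "i3 + (i4 - i3) = i4" using ord by simp
    have s2: "i4 + (?n - i4 + i1) = ?n + i1" using lt by simp
    have e1: "(i3 + (i4 - i3)) mod ?n = i4" using s1 lt(4) by simp
    have e2: "(i3 + (i4 - i3) + (?n - i4 + i1)) mod ?n = i1"
      unfolding s1 s2 using lt(1) by simp
    have l1: "0 < i4 - i3" using ord by simp
    have l2: "0 < ?n - i4 + i1" using lt by simp
    have "2 * ((i4 - i3) + (?n - i4 + i1)) \<le> ?n"
    proof -
      obtain x where x: "i3 = i1 + x" using ord less_imp_le le_iff_add by (metis order.strict_trans)
      obtain y where y: "i4 = i3 + y" using ord less_imp_le le_iff_add by metis
      obtain z where z: "?n = i4 + z" using lt less_imp_le le_iff_add by metis
      note xyz = x y z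
      show ?thesis using False unfolding xyz by simp
    qed
    from cyc_triple[OF cg ic lt(3) l1 l2 this] obtain P where "isometric_path V E P"
      "{c ! i3, c ! i4, c ! i1} \<subseteq> set P"
      "c ! i3 \<noteq> c ! i4" "c ! i3 \<noteq> c ! i1" "c ! i4 \<noteq> c ! i1"
      unfolding e1 e2 by blast
    then show False using gp_contra[OF g inS(3,4,1)] by blast
  qed
qed


lemma singleton_isometric:
  assumes "v \<in> V" shows "isometric_path V E [v]"
proof -
  have "walk V E [v]" using assms by (simp add: walk_def)
  moreover have "dist {v} (path_edges [v]) v v = 0" using dist_self[of v "{v}"] by simp
  moreover have "dist V E v v = 0" using dist_self[OF assms] .
  ultimately show ?thesis unfolding isometric_path_def by simp
qed

theorem corollary3p2:
  fixes V :: "'a set" and E :: "'a \<Rightarrow> 'a \<Rightarrow> bool"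
  assumes "connected_graph V E"
  shows "gp V E \<le> 2 * ip V E \<and>
         ((\<exists>C. (\<forall>c\<in>C. isometric_cycle V E c) \<and> (\<Union>c\<in>C. set c) = V)
           \<longrightarrow> gp V E \<le> 3 * ic V E)"
proof
  have sg: "simple_graph V E" using assms by (simp add: connected_graph_def)
  have fin: "finite V" using sg by (simp add: simple_graph_def)
  show "gp V E \<le> 2 * ip V E"
  proof -
    let ?P0 = "(\<lambda>v. [v]) ` V"
    have "finite ?P0 \<and> card ?P0 = card ?P0 \<and> (\<forall>p\<in>?P0. isometric_path V E p) \<and> (\<Union>p\<in>?P0. set p) = V"
      using fin singleton_isometric by auto
    then have "\<exists>k P. finite P \<and> card P = k \<and> (\<forall>p\<in>P. isometric_path V E p) \<and> (\<Union>p\<in>P. set p) = V"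
      by blast
    then have "\<exists>P. finite P \<and> card P = ip V E \<and> (\<forall>p\<in>P. isometric_path V E p) \<and> (\<Union>p\<in>P. set p) = V"
      unfolding ip_def by (rule LeastI_ex)
    then obtain P where P: "finite P" "card P = ip V E" "\<forall>p\<in>P. isometric_path V E p" "(\<Union>p\<in>P. set p) = V"
      by blast
    show ?thesis
    proof (rule gp_bound[OF sg])
      fix S assume g: "general_position V E S"
      then have "S \<subseteq> (\<Union>p\<in>P. set p)" using P(4) unfolding general_position_def by blast
      then have "card S \<le> 2 * card P" using cover_bound[OF P(1), of S 2] path_le2[OF g] P(3) by blast
      then show "card S \<le> 2 * ip V E" using P(2) by simp
    qed
  qed
  show "(\<exists>C. (\<forall>c\<in>C. isometric_cycle V E c) \<and> (\<Union>c\<in>C. set c) = V) \<longrightarrow> gp V E \<le> 3 * ic V E"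
  proof
    assume "\<exists>C. (\<forall>c\<in>C. isometric_cycle V E c) \<and> (\<Union>c\<in>C. set c) = V"
    then obtain C where C: "\<forall>c\<in>C. isometric_cycle V E c" "(\<Union>c\<in>C. set c) = V" by blast
    define f where "f v = (SOME c. c \<in> C \<and> v \<in> set c)" for v
    have fv: "f v \<in> C \<and> v \<in> set (f v)" if vV: "v \<in> V" for v
    proof -
      obtain c where "c \<in> C" "v \<in> set c" using C(2) vV by blast
      then show ?thesis unfolding f_def by (intro someI[of "\<lambda>c. c \<in> C \<and> v \<in> set c" c]) blast
    qed
    let ?C0 = "f ` V"
    have "finite ?C0" using fin by simp
    moreover have "\<forall>c\<in>?C0. isometric_cycle V E c" using fv C(1) by blast
    moreover have "(\<Union>c\<in>?C0. set c) = V"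
    proof
      show "(\<Union>c\<in>?C0. set c) \<subseteq> V" using fv C(2) by blast
      show "V \<subseteq> (\<Union>c\<in>?C0. set c)" using fv by blast
    qed
    ultimately have "\<exists>k C. finite C \<and> card C = k \<and> (\<forall>c\<in>C. isometric_cycle V E c) \<and> (\<Union>c\<in>C. set c) = V"
      by blast
    then have "\<exists>D. finite D \<and> card D = ic V E \<and> (\<forall>c\<in>D. isometric_cycle V E c) \<and> (\<Union>c\<in>D. set c) = V"
      unfolding ic_def by (rule LeastI_ex)
    then obtain D where D: "finite D" "card D = ic V E" "\<forall>c\<in>D. isometric_cycle V E c" "(\<Union>c\<in>D. set c) = V"
      by blast
    show "gp V E \<le> 3 * ic V E"
    proof (rule gp_bound[OF sg])
      fix S assume g: "general_position V E S"
      then have "S \<subseteq> (\<Union>c\<in>D. set c)" using D(4) unfolding general_position_def by blast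
      then have "card S \<le> 3 * card D" using cover_bound[OF D(1), of S 3] cycle_le3[OF assms g] D(3) by blast
      then show "card S \<le> 3 * ic V E" using D(2) by simp
    qed
  qed
qed

end
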